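(* Let $M$ be an abelian group and $\mathcal{A}=\bigoplus_{\chi\in M}\mathcal{A}^\chi$ a finite-dimensional commutative unital $M$-graded $\mathbb{C}$-algebra (so $\mathcal{A}^\chi\mathcal{A}^\psi\subseteq\mathcal{A}^{\chi+\psi}$). Suppose there exist an integer $d>0$ and $\chi\in M$ with $\dim\mathcal{A}^\chi>\dim\mathcal{A}^{d\chi}$. Then there exists $\varepsilon\in\mathcal{A}\setminus\{0\}$ with $\varepsilon^d=0$. *)

theory Defs
  imports Complex_Main
begin

definition natmul :: "nat \<Rightarrow> 'm::ab_group_add \<Rightarrow> 'm" where
  "natmul n x = (\<Sum>_<n. x)"

text \<open>The grading Agr assigns to every degree a subspace, the whole algebra is the
  internal direct sum of these subspaces (every element is uniquely a finitely
  supported sum of homogeneous components), and Agr chi * Agr psi lies in Agr (chi+psi).\<close>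
definition graded_fd_calgebra ::
  "(complex \<Rightarrow> 'a::comm_ring_1 \<Rightarrow> 'a) \<Rightarrow> ('m::ab_group_add \<Rightarrow> 'a set) \<Rightarrow> bool" where
  "graded_fd_calgebra sc Agr \<longleftrightarrow>
     vector_space sc \<and>
     (\<forall>c x y. sc c (x * y) = sc c x * y) \<and>
     (\<exists>B. finite B \<and> module.span sc B = UNIV) \<and>
     (\<forall>\<chi>. module.subspace sc (Agr \<chi>)) \<and>
     (\<forall>x. \<exists>!f. finite {\<chi>. f \<chi> \<noteq> 0} \<and> (\<forall>\<chi>. f \<chi> \<in> Agr \<chi>) \<and>
              x = (\<Sum>\<chi>\<in>{\<chi>. f \<chi> \<noteq> 0}. f \<chi>)) \<and>
     (\<forall>\<chi> \<psi> x y. x \<in> Agr \<chi> \<longrightarrow> y \<in> Agr \<psi> \<longrightarrow> x * y \<in> Agr (\<chi> + \<psi>))"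

end

theory Submission
  imports Defs
begin

lemma natmul_Suc: "natmul (Suc k) x = x + natmul k x"
  by (simp add: natmul_def)

lemma natmul_1: "natmul 1 x = x"
  by (simp add: natmul_def)

lemma pw: "(x*w)^(Suc m) = (x^m*w)*(x*w^m)" for x w :: "'a::comm_ring_1"
  by (simp add: power_mult_distrib mult_ac)

lemma main_le:
  fixes sc :: "complex \<Rightarrow> 'a::comm_ring_1 \<Rightarrow> 'a"
    and Agr :: "'m::ab_group_add \<Rightarrow> 'a set"
    and d :: nat and \<chi> :: 'm
  assumes VS: "vector_space sc"
    and scm: "\<forall>c x y. sc c (x * y) = sc c x * y"
    and fin: "finite B" and spB: "module.span sc B = UNIV"
    and sub: "\<forall>\<chi>. module.subspace sc (Agr \<chi>)"
    and mul: "\<forall>\<chi> \<psi> x y. x \<in> Agr \<chi> \<longrightarrow> y \<in> Agr \<psi> \<longrightarrow> x * y \<in> Agr (\<chi> + \<psi>)"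
    and d2: "d \<ge> 2"
    and nonil: "\<forall>\<epsilon>::'a. \<epsilon> ^ d = 0 \<longrightarrow> \<epsilon> = 0"
  shows "vector_space.dim sc (Agr \<chi>) \<le> vector_space.dim sc (Agr (natmul d \<chi>))"
proof -
  interpret V: vector_space sc by fact
  obtain C where C: "C \<subseteq> B" "V.independent C" "B \<subseteq> V.span C"
    using V.maximal_independent_subset[of B] by blast
  have spC: "V.span C = UNIV"
    using C spB by (metis V.span_mono V.span_span top.extremum_unique)
  have finC: "finite C" using C fin finite_subset by blast
  interpret F: finite_dimensional_vector_space sc C
    by unfold_locales (use finC C spC in auto)
  interpret P: finite_dimensional_vector_space_pair_1 sc C sc
    by unfold_locales
  have red: "z = 0" if "z * z = 0" for z :: 'a
  proof -
    obtain k where k: "d = Suc (Suc k)" using d2 by (metis add_2_eq_Suc le_Suc_ex)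
    have "z ^ d = (z * z) * z ^ k" by (simp add: k mult.assoc)
    then have "z ^ d = 0" using that by simp
    then show ?thesis using nonil by blast
  qed
  have sc0: "sc c 0 = 0" for c by (rule V.scale_zero_right)
  define ann where "ann x = {z. z * x = 0}" for x :: 'a
  have annsub: "V.subspace (ann x)" for x
    unfolding V.subspace_def ann_def
    by (auto simp: distrib_right) (metis scm sc0)
  have Asub: "V.subspace (Agr \<chi>)" using sub by blast
  have pow: "x ^ k * y \<in> Agr (natmul (Suc k) \<chi>)" if "x \<in> Agr \<chi>" "y \<in> Agr \<chi>" for x y k
  proof (induction k)
    case 0 then show ?case using that by (simp add: natmul_def)
  next
    case (Suc k)
    have "x * (x ^ k * y) \<in> Agr (\<chi> + natmul (Suc k) \<chi>)" using mul Suc that by blast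
    then show ?case by (simp add: natmul_Suc[of "Suc k"] mult.assoc)
  qed
  have "0 \<in> Agr \<chi>" using Asub V.subspace_0 by blast
  then obtain x where x: "x \<in> Agr \<chi>"
    and xmin: "\<forall>x'. x' \<in> Agr \<chi> \<longrightarrow> V.dim (ann x) \<le> V.dim (ann x')"
    using ex_has_least_nat[of "\<lambda>x. x \<in> Agr \<chi>" 0 "\<lambda>x. V.dim (ann x)"] by blast
  have key: "y = 0" if y: "y \<in> Agr \<chi>" "x * y = 0" for y
  proof (rule ccontr)
    assume yn: "y \<noteq> 0"
    have sub1: "ann (x + y) \<subseteq> ann x"
    proof
      fix z assume "z \<in> ann (x + y)"
      then have h: "z * x + z * y = 0" by (simp add: ann_def distrib_left)
      then have zx: "z * x = - (z * y)" by (simp add: eq_neg_iff_add_eq_0)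
      have "z * y * x = z * (x * y)" by (simp add: ac_simps)
      then have zyx: "z * y * x = 0" using y(2) by simp
      have zxx: "z * x * x = 0" using zx zyx by simp
      have "(z * x) * (z * x) = z * (z * x * x)" by (simp add: ac_simps)
      then have "(z * x) * (z * x) = 0" using zxx by simp
      then have "z * x = 0" by (rule red)
      then show "z \<in> ann x" by (simp add: ann_def)
    qed
    have "y \<in> ann x" using y by (simp add: ann_def mult.commute)
    moreover have "y \<notin> ann (x + y)"
    proof
      assume "y \<in> ann (x + y)"
      then have "y * x + y * y = 0" by (simp add: ann_def distrib_left)
      then have "y * y = 0" using y(2) by (simp add: mult.commute)
      then show False using red yn by blast
    qed
    ultimately have "ann (x + y) \<subset> ann x" using sub1 by blast
    moreover have e1: "V.span (ann (x + y)) = ann (x + y)" by (simp add: annsub)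
    moreover have e2: "V.span (ann x) = ann x" by (simp add: annsub)
    ultimately have "V.span (ann (x + y)) \<subset> V.span (ann x)"
      by (simp only:)
    then have "V.dim (ann (x + y)) < V.dim (ann x)"
      by (rule F.dim_psubset)
    moreover have "x + y \<in> Agr \<chi>" using x y Asub V.subspace_add by blast
    ultimately show False using xmin by (meson not_le)
  qed
  define f where "f y = x ^ (d - 1) * y" for y
  have lin: "Vector_Spaces.linear sc sc f"
    unfolding Vector_Spaces.linear_iff f_def
  proof (intro conjI allI)
    show "x ^ (d - 1) * (a + b) = x ^ (d - 1) * a + x ^ (d - 1) * b" for a b
      by (simp add: distrib_left)
    show "x ^ (d - 1) * sc c a = sc c (x ^ (d - 1) * a)" for c a
      by (metis scm mult.commute)
  qed (use VS in auto)
  have inj: "inj_on f (V.span (Agr \<chi>))"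
  proof (rule inj_onI)
    fix y y' assume yy: "y \<in> V.span (Agr \<chi>)" "y' \<in> V.span (Agr \<chi>)" "f y = f y'"
    have spA: "V.span (Agr \<chi>) = Agr \<chi>" using Asub V.span_eq_iff by blast
    have yA: "y \<in> Agr \<chi>" using yy(1) spA by (simp only:)
    have y'A: "y' \<in> Agr \<chi>" using yy(2) spA by (simp only:)
    have w: "y - y' \<in> Agr \<chi>" by (rule V.subspace_diff[OF Asub yA y'A])
    have fw: "x ^ (d - 1) * (y - y') = 0" using yy(3) by (simp add: f_def right_diff_distrib)
    have "(x * (y - y')) ^ d = (x ^ (d - 1) * (y - y')) * (x * (y - y') ^ (d - 1))"
    proof -
      obtain m where m: "d = Suc m" using d2 by (cases d) auto
      show ?thesis unfolding m using pw[of x "y - y'" m] by simp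
    qed
    then have "(x * (y - y')) ^ d = 0" using fw by (simp only: mult_zero_left)
    then have "x * (y - y') = 0" using nonil by blast
    then have "y - y' = 0" using key w by blast
    then show "y = y'" by simp
  qed
  have e: "V.dim (f ` Agr \<chi>) = V.dim (Agr \<chi>)" by (rule P.dim_image_eq[OF lin inj])
  have "f ` Agr \<chi> \<subseteq> Agr (natmul d \<chi>)"
  proof
    fix z assume "z \<in> f ` Agr \<chi>"
    then obtain y where "y \<in> Agr \<chi>" "z = f y" by blast
    then show "z \<in> Agr (natmul d \<chi>)" using pow[OF x, of y "d - 1"] d2 by (simp add: f_def)
  qed
  then have "V.dim (f ` Agr \<chi>) \<le> V.dim (Agr (natmul d \<chi>))" by (rule F.dim_subset)
  then show ?thesis unfolding e .
qed

theorem lemma2p1: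
  fixes sc :: "complex \<Rightarrow> 'a::comm_ring_1 \<Rightarrow> 'a"
    and Agr :: "'m::ab_group_add \<Rightarrow> 'a set"
    and d :: nat and \<chi> :: 'm
  assumes "graded_fd_calgebra sc Agr"
    and "d > 0"
    and "vector_space.dim sc (Agr \<chi>) > vector_space.dim sc (Agr (natmul d \<chi>))"
  shows "\<exists>\<epsilon>::'a. \<epsilon> \<noteq> 0 \<and> \<epsilon> ^ d = 0"
proof (rule ccontr)
  assume H: "\<not> ?thesis"
  have "d \<noteq> 1" using assms(3) by (auto simp: natmul_def)
  then have d2: "d \<ge> 2" using assms(2) by linarith
  have VS: "vector_space sc" using assms(1) by (simp add: graded_fd_calgebra_def)
  have scm: "\<forall>c x y. sc c (x * y) = sc c x * y" using assms(1) by (simp add: graded_fd_calgebra_def)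
  have sub: "\<forall>\<chi>. module.subspace sc (Agr \<chi>)" using assms(1) by (simp add: graded_fd_calgebra_def)
  have mul: "\<forall>\<chi> \<psi> x y. x \<in> Agr \<chi> \<longrightarrow> y \<in> Agr \<psi> \<longrightarrow> x * y \<in> Agr (\<chi> + \<psi>)"
    using assms(1) by (simp add: graded_fd_calgebra_def)
  have "\<exists>B. finite B \<and> module.span sc B = UNIV" using assms(1) by (simp add: graded_fd_calgebra_def)
  then obtain B where fin: "finite B" and spB: "module.span sc B = UNIV" by blast
  have "vector_space.dim sc (Agr \<chi>) \<le> vector_space.dim sc (Agr (natmul d \<chi>))"
    by (rule main_le[OF VS scm fin spB sub mul d2]) (use H in blast)
  then show False using assms(3) by simp
qed

end
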